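(* Consider the Krasovskii-regularized Lur'e system $\dot x\in F(x)$ of the context. Suppose Assumption 1 holds, that $\lim_{s\to0^+}\psi_i(s)>0$ and $\lim_{s\to0^-}\psi_i(s)<0$ for each $i$, and that $\overline\Gamma=\mathrm{diag}(\overline\gamma_1,\dots,\overline\gamma_p)$ with $\overline\gamma_i>0$ satisfies $\overline\Gamma CB+(CB)^\top\overline\Gamma>0$. Let $\nu,c>0$ be constants such that $|u|\ge c$ for all $u\in-\boldsymbol\Psi(y)$ and all $y$ with $0<|y|\le\nu$. Let $\lambda_1>0$ be the smallest eigenvalue of $\overline\Gamma CB+(CB)^\top\overline\Gamma$ and $\lambda_2:=|\overline\Gamma CA|$ (spectral norm). Define $\widetilde W(x):=W(Cx):=2\sum_{i=1}^p\overline\gamma_i\int_0^{C_ix}\psi_i(\sigma)\,d\sigma$. Then there exist $\mu\in(0,\nu]$ with $\omega:=\lambda_1\big(c-2\mu\lambda_2/\lambda_1\big)>0$, and $\alpha_4,\alpha_5\in\mathcal{K}_\infty$, such that $\alpha_4(|Cx|)\le W(Cx)\le\alpha_5(|Cx|)$ for all $x$ with $|x|\le\mu$, and $\sup\dot{\overline{\widetilde W}}_F(x)\le-c\,\omega$ for all $x$ with $|x|\le\mu$ and $Cx\neq0$ (with $\sup\emptyset=-\infty$).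
   Context: System: $\dot x=Ax+Bu$, $y=Cx$, $u=-\boldsymbol\psi(y)$, $x\in\mathbb{R}^n$, $u,y\in\mathbb{R}^p$, $\boldsymbol\psi(y)=(\psi_1(y_1),\dots,\psi_p(y_p))$; $C_i$ is the $i$-th row of $C$. Piecewise continuous: finitely many discontinuities on each bounded interval, continuous between them, finite one-sided limits. Krasovskii regularization: $\boldsymbol\Psi_i(s):=\bigcap_{\delta>0}\overline{\mathrm{co}}\,\psi_i(s+\delta[-1,1])$, $\boldsymbol\Psi(y):=\boldsymbol\Psi_1(y_1)\times\dots\times\boldsymbol\Psi_p(y_p)$, $F(x):=\{Ax-Bw:w\in\boldsymbol\Psi(Cx)\}$. Assumption 1: for each $i$, $\psi_i$ is piecewise continuous and there is $\zeta_i\in(0,+\infty]$ with $\psi_i(s)(\psi_i(s)-\zeta_is)\le0$ for all $s$ (for $\zeta_i=+\infty$: $\psi_i(s)s\ge0$). The generalized gradient of $\widetilde W$ is $\partial\widetilde W(x)=\{2C^\top\overline\Gamma w:w\in\boldsymbol\Psi(Cx)\}$, and the set-valued Lie derivative is $\dot{\overline{\widetilde W}}_F(x):=\{a\in\mathbb{R}:\exists f\in F(x),\ \langle v,f\rangle=a\ \forall v\in\partial\widetilde W(x)\}$. $\mathcal{K}_\infty$: continuous strictly increasing unbounded functions $\mathbb{R}_{\ge0}\to\mathbb{R}_{\ge0}$ vanishing at $0$. *)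

theory Defs
  imports "HOL-Analysis.Analysis"
begin

definition piecewise_cont :: "(real \<Rightarrow> real) \<Rightarrow> bool" where
  "piecewise_cont f \<longleftrightarrow>
     (\<forall>a b. finite {s \<in> {a..b}. \<not> isCont f s}) \<and>
     (\<forall>s. \<exists>l. (f \<longlongrightarrow> l) (at_left s)) \<and>
     (\<forall>s. \<exists>r. (f \<longlongrightarrow> r) (at_right s))"

definition kras :: "(real \<Rightarrow> real) \<Rightarrow> real \<Rightarrow> real set" where
  "kras f s = (\<Inter>\<delta>\<in>{0<..}. closure (convex hull (f ` {s - \<delta>..s + \<delta>})))"

definition Kras_vec :: "('p \<Rightarrow> real \<Rightarrow> real) \<Rightarrow> real^'p \<Rightarrow> (real^'p) set" where
  "Kras_vec \<psi> y = {w. \<forall>i. w $ i \<in> kras (\<psi> i) (y $ i)}"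

definition F_kras :: "real^'n^'n \<Rightarrow> real^'p^'n \<Rightarrow> real^'n^'p \<Rightarrow> ('p \<Rightarrow> real \<Rightarrow> real)
    \<Rightarrow> real^'n \<Rightarrow> (real^'n) set" where
  "F_kras A B C \<psi> x = {A *v x - B *v w | w. w \<in> Kras_vec \<psi> (C *v x)}"

definition sint :: "(real \<Rightarrow> real) \<Rightarrow> real \<Rightarrow> real" where
  "sint f t = (if 0 \<le> t then integral {0..t} f else - integral {t..0} f)"

definition W_fun :: "('p::finite \<Rightarrow> real) \<Rightarrow> ('p \<Rightarrow> real \<Rightarrow> real) \<Rightarrow> real^'p \<Rightarrow> real" where
  "W_fun \<gamma> \<psi> y = 2 * (\<Sum>i\<in>UNIV. \<gamma> i * sint (\<psi> i) (y $ i))"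

definition diag_mat :: "('p::finite \<Rightarrow> real) \<Rightarrow> real^'p^'p" where
  "diag_mat \<gamma> = (\<chi> i j. if i = j then \<gamma> i else 0)"

definition gen_grad :: "real^'n^'p \<Rightarrow> ('p::finite \<Rightarrow> real) \<Rightarrow> ('p \<Rightarrow> real \<Rightarrow> real)
    \<Rightarrow> real^'n \<Rightarrow> (real^'n) set" where
  "gen_grad C \<gamma> \<psi> x = {2 *\<^sub>R (transpose C *v (diag_mat \<gamma> *v w)) | w. w \<in> Kras_vec \<psi> (C *v x)}"

definition set_lie :: "(real^'n) set \<Rightarrow> (real^'n) set \<Rightarrow> real set" where
  "set_lie G Fx = {a. \<exists>f\<in>Fx. \<forall>v\<in>G. v \<bullet> f = a}"

definition pos_def :: "real^'p^'p \<Rightarrow> bool" where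
  "pos_def M \<longleftrightarrow> (\<forall>v. v \<noteq> 0 \<longrightarrow> v \<bullet> (M *v v) > 0)"

definition min_eig :: "real^'p^'p \<Rightarrow> real" where
  "min_eig M = Min {l. \<exists>v. v \<noteq> 0 \<and> M *v v = l *\<^sub>R v}"

definition spec_norm :: "real^'n^'p \<Rightarrow> real" where
  "spec_norm M = onorm (\<lambda>x. M *v x)"

definition class_K_inf :: "(real \<Rightarrow> real) \<Rightarrow> bool" where
  "class_K_inf \<alpha> \<longleftrightarrow> continuous_on {0..} \<alpha> \<and> strict_mono_on {0..} \<alpha> \<and> \<alpha> 0 = 0 \<and>
     filterlim \<alpha> at_top at_top"

end

theory Submission
  imports Defs
begin


lemma inner_mv: "(u::real^'n) \<bullet> (M *v v) = (transpose M *v u) \<bullet> v"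
  by (metis dot_lmul_matrix vector_transpose_matrix transpose_transpose)

lemma sym_eig:
  fixes M :: "real^'p^'p"
  assumes sym: "transpose M = M"
  shows "finite {l. \<exists>v. v \<noteq> 0 \<and> M *v v = l *\<^sub>R v}"
    and "{l. \<exists>v. v \<noteq> 0 \<and> M *v v = l *\<^sub>R v} \<noteq> {}"
    and "\<forall>w. min_eig M * (w \<bullet> w) \<le> w \<bullet> (M *v w)"
    and "min_eig M \<in> {l. \<exists>v. v \<noteq> 0 \<and> M *v v = l *\<^sub>R v}"
proof -
  define E where "E = {l. \<exists>v. v \<noteq> 0 \<and> M *v v = l *\<^sub>R v}"
  have symI: "u \<bullet> (M *v v) = (M *v u) \<bullet> v" for u v
    using inner_mv[of u M v] sym by simp
  define q where "q v = v \<bullet> (M *v v)" for v :: "real^'p"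
  have cq: "continuous_on (sphere 0 1) q"
    unfolding q_def by (intro continuous_intros linear_continuous_on matrix_vector_mul_bounded_linear)
  obtain e :: "real^'p" where e: "norm e = 1"
    using vector_choose_size[of 1] by auto
  have "sphere (0::real^'p) 1 \<noteq> {}" using e by auto
  then obtain v0 where v0: "v0 \<in> sphere 0 1" and mn: "\<forall>y\<in>sphere 0 1. q v0 \<le> q y"
    using continuous_attains_inf[OF compact_sphere _ cq] by blast
  define l0 where "l0 = q v0"
  have nv0: "norm v0 = 1" using v0 by simp
  have quad: "l0 * (v \<bullet> v) \<le> v \<bullet> (M *v v)" for v
  proof (cases "v = 0")
    case True then show ?thesis by simp
  next
    case False
    define u where "u = (1 / norm v) *\<^sub>R v"
    have "u \<in> sphere 0 1" using False by (simp add: u_def)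
    hence "l0 \<le> q u" using mn l0_def by simp
    also have "q u = (v \<bullet> (M *v v)) / (norm v)^2"
      by (simp add: q_def u_def matrix_vector_mult_scaleR power2_eq_square)
    finally have "l0 * (norm v)^2 \<le> v \<bullet> (M *v v)"
      using False by (simp add: le_divide_eq)
    then show ?thesis by (simp add: power2_norm_eq_inner)
  qed
  define z where "z = M *v v0 - l0 *\<^sub>R v0"
  have zz: "z = 0"
  proof (rule ccontr)
    assume zn: "z \<noteq> 0"
    define h where "h v = v \<bullet> (M *v v) - l0 * (v \<bullet> v)" for v
    have hge: "h v \<ge> 0" for v using quad[of v] by (simp add: h_def)
    have h0: "h v0 = 0" using nv0 by (simp add: h_def l0_def q_def power2_norm_eq_inner[symmetric])
    have exp: "h (v0 - t *\<^sub>R z) = h v0 - 2 * t * (z \<bullet> z) + t^2 * h z" for t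
    proof -
      have a: "z \<bullet> (M *v v0) - l0 * (z \<bullet> v0) = z \<bullet> z"
        by (simp add: z_def inner_diff_right)
      have b: "v0 \<bullet> (M *v z) = z \<bullet> (M *v v0)"
        using symI[of v0 z] by (simp add: inner_commute)
      show ?thesis
        unfolding h_def using a b
        by (simp add: matrix_vector_mult_diff_distrib matrix_vector_mult_scaleR inner_diff_left inner_diff_right
            algebra_simps power2_eq_square inner_commute[of z v0])
    qed
    have zpos: "z \<bullet> z > 0" using zn by simp
    show False
    proof (cases "h z \<le> 0")
      case True
      have "0 \<le> h (v0 - 1 *\<^sub>R z)" by (rule hge)
      also have "\<dots> = - 2 * (z \<bullet> z) + h z" using exp[of 1] h0 by simp
      finally show False using True zpos by linarith
    next
      case False
      define t where "t = (z \<bullet> z) / h z"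
      have "0 \<le> h (v0 - t *\<^sub>R z)" by (rule hge)
      also have "\<dots> = - 2 * t * (z \<bullet> z) + t^2 * h z" using exp[of t] h0 by simp
      also have "\<dots> = - t * (z \<bullet> z)" using False by (simp add: t_def power2_eq_square field_simps)
      finally have "t * (z \<bullet> z) \<le> 0" by simp
      moreover have "t > 0" using False zpos by (simp add: t_def)
      ultimately show False using zpos by (simp add: mult_le_0_iff)
    qed
  qed
  have l0E: "l0 \<in> E" unfolding E_def using zz nv0 by (auto simp: z_def intro!: exI[of _ v0])
  have lowE: "l0 \<le> l" if lE: "l \<in> E" for l
  proof -
    obtain v where v: "v \<noteq> 0" "M *v v = l *\<^sub>R v" using lE unfolding E_def by auto
    have "l0 * (v \<bullet> v) \<le> l * (v \<bullet> v)" using quad[of v] v by simp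
    thus ?thesis using v by simp
  qed
  define ev where "ev l = (SOME v. v \<noteq> 0 \<and> M *v v = l *\<^sub>R v)" for l
  have evp: "ev l \<noteq> 0 \<and> M *v ev l = l *\<^sub>R ev l" if "l \<in> E" for l
  proof -
    have "\<exists>v. v \<noteq> 0 \<and> M *v v = l *\<^sub>R v" using that unfolding E_def by auto
    then show ?thesis unfolding ev_def by (rule someI_ex)
  qed
  have inj: "inj_on ev E"
  proof (rule inj_onI)
    fix a b assume "a \<in> E" "b \<in> E" "ev a = ev b"
    then have "a *\<^sub>R ev a = b *\<^sub>R ev a" "ev a \<noteq> 0" using evp by metis+
    then show "a = b" by (metis scaleR_cancel_right)
  qed
  have orth: "pairwise orthogonal (ev ` E)"
  proof (clarsimp simp: pairwise_def)
    fix a b assume ab: "a \<in> E" "b \<in> E" "ev a \<noteq> ev b"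
    then have "a \<noteq> b" by auto
    have "a * (ev a \<bullet> ev b) = (M *v ev a) \<bullet> ev b" using evp[OF ab(1)] by simp
    also have "\<dots> = ev a \<bullet> (M *v ev b)" using symI by simp
    also have "\<dots> = b * (ev a \<bullet> ev b)" using evp[OF ab(2)] by simp
    finally have "ev a \<bullet> ev b = 0" using \<open>a \<noteq> b\<close> by simp
    then show "orthogonal (ev a) (ev b)" by (simp add: orthogonal_def)
  qed
  have "0 \<notin> ev ` E" using evp by auto
  then have "finite (ev ` E)" using independent_bound pairwise_orthogonal_independent orth by blast
  then have finE: "finite E" using inj finite_imageD by blast
  have me: "min_eig M = l0" unfolding min_eig_def E_def[symmetric]
    using finE l0E lowE by (intro Min_eqI) auto
  show "finite {l. \<exists>v. v \<noteq> 0 \<and> M *v v = l *\<^sub>R v}" using finE E_def by simp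
  show "{l. \<exists>v. v \<noteq> 0 \<and> M *v v = l *\<^sub>R v} \<noteq> {}" using l0E E_def by auto
  show "\<forall>w. min_eig M * (w \<bullet> w) \<le> w \<bullet> (M *v w)" using quad me by simp
  show "min_eig M \<in> {l. \<exists>v. v \<noteq> 0 \<and> M *v v = l *\<^sub>R v}" using l0E me E_def by simp
qed



lemma int_bounds:
  fixes f :: "real \<Rightarrow> real"
  assumes ab: "a < b" and ct: "\<forall>s\<in>{a<..<b}. isCont f s"
    and la: "(f \<longlongrightarrow> la) (at_right a)" and lb: "(f \<longlongrightarrow> lb) (at_left b)"
    and bd: "\<forall>s\<in>{a<..<b}. m \<le> f s \<and> f s \<le> M"
    and "m \<le> la" "la \<le> M" "m \<le> lb" "lb \<le> M"
  shows "m * (b - a) \<le> integral {a..b} f \<and> integral {a..b} f \<le> M * (b - a)"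
proof -
  define g where "g s = (if s = a then la else if s = b then lb else f s)" for s
  have cg: "continuous_on {a..b} g"
  proof (clarsimp simp: continuous_on_eq_continuous_within)
    fix x assume x: "a \<le> x" "x \<le> b"
    consider "x = a" | "x = b" | "a < x \<and> x < b" using x by linarith
    then show "continuous (at x within {a..b}) g"
    proof cases
      case 1
      have ev: "\<forall>\<^sub>F s in at_right a. f s = g s"
        using eventually_at_right_field[of "\<lambda>s. f s = g s" a] ab
        by (auto simp: g_def intro!: exI[of _ b])
      have "(g \<longlongrightarrow> la) (at_right a)" using tendsto_cong[OF ev] la by simp
      then show ?thesis using 1 ab by (simp add: continuous_within at_within_Icc_at_right g_def)
    next
      case 2
      have ev: "\<forall>\<^sub>F s in at_left b. f s = g s"
        using eventually_at_left_field[of "\<lambda>s. f s = g s" b] ab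
        by (auto simp: g_def intro!: exI[of _ a])
      have "(g \<longlongrightarrow> lb) (at_left b)" using tendsto_cong[OF ev] lb by simp
      then show ?thesis using 2 ab by (simp add: continuous_within at_within_Icc_at_left g_def)
    next
      case 3
      have ev: "\<forall>\<^sub>F s in nhds x. f s = g s"
      proof -
        have "open {a<..<b}" by simp
        then have "\<forall>\<^sub>F s in nhds x. s \<in> {a<..<b}" using 3 by (intro eventually_nhds_in_open) auto
        then show ?thesis by eventually_elim (auto simp: g_def)
      qed
      have "isCont g x" using isCont_cong[OF ev] ct 3 by auto
      then show ?thesis using 3 by (simp add: at_within_Icc_at continuous_at)
    qed
  qed
  have gi: "g integrable_on {a..b}" using cg integrable_continuous_interval by blast
  have eq: "integral {a..b} f = integral {a..b} g"
    by (rule integral_spike[of "{a,b}"]) (auto simp: g_def)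
  have gb: "m \<le> g s \<and> g s \<le> M" if "s \<in> {a..b}" for s
    using that bd assms(6-9) by (auto simp: g_def)
  have "integral {a..b} (\<lambda>_. m) \<le> integral {a..b} g"
    by (rule integral_le) (use gi gb in auto)
  moreover have "integral {a..b} g \<le> integral {a..b} (\<lambda>_. M)"
    by (rule integral_le) (use gi gb in auto)
  ultimately show ?thesis using ab eq by (simp add: mult.commute)
qed



lemma psi_local:
  fixes f :: "real \<Rightarrow> real"
  assumes pwc: "piecewise_cont f" and lp: "l > 0" "(f \<longlongrightarrow> l) (at_right 0)"
    and ln: "l' < 0" "(f \<longlongrightarrow> l') (at_left 0)"
  shows "\<exists>d>0. \<exists>k>0. \<exists>K. \<forall>t. \<bar>t\<bar> < d \<longrightarrow> k * \<bar>t\<bar> \<le> sint f t \<and> sint f t \<le> K * \<bar>t\<bar>"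
proof -
  define D where "D = {s \<in> {-1..1}. \<not> isCont f s}"
  have fD: "finite D" using pwc unfolding piecewise_cont_def D_def by blast
  define d1 where "d1 = Min (insert 1 (abs ` (D - {0})))"
  have fin1: "finite (insert 1 (abs ` (D - {0})))" using fD by simp
  have d1pos: "d1 > 0" unfolding d1_def using fin1 by (subst Min_gr_iff) auto
  have d1le: "d1 \<le> 1" unfolding d1_def using fin1 by simp
  have cont1: "isCont f s" if "0 < \<bar>s\<bar>" "\<bar>s\<bar> < d1" for s
  proof (rule ccontr)
    assume "\<not> isCont f s"
    then have "s \<in> D - {0}" using that d1le by (auto simp: D_def)
    then have "d1 \<le> \<bar>s\<bar>" unfolding d1_def using fin1 by (intro Min_le) auto
    then show False using that by simp
  qed
  have "\<forall>\<^sub>F s in at_right 0. l/2 < f s \<and> f s < 2*l"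
    using order_tendstoD(1)[OF lp(2), of "l/2"] order_tendstoD(2)[OF lp(2), of "2*l"] lp(1)
    by (auto elim: eventually_elim2)
  then obtain d2 where d2: "d2 > 0" "\<forall>s. 0 < s \<longrightarrow> s < d2 \<longrightarrow> l/2 < f s \<and> f s < 2*l"
    by (auto simp: eventually_at_right_field)
  have "\<forall>\<^sub>F s in at_left 0. 2*l' < f s \<and> f s < l'/2"
    using order_tendstoD(1)[OF ln(2), of "2*l'"] order_tendstoD(2)[OF ln(2), of "l'/2"] ln(1)
    by (auto elim: eventually_elim2)
  then obtain d3 where d3: "d3 < 0" "\<forall>s. d3 < s \<longrightarrow> s < 0 \<longrightarrow> 2*l' < f s \<and> f s < l'/2"
    by (auto simp: eventually_at_left_field)
  define d where "d = min d1 (min d2 (- d3))"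
  define k where "k = min (l/2) (- l'/2)"
  define K where "K = max (2*l) (- 2*l')"
  have dpos: "d > 0" using d1pos d2 d3 by (simp add: d_def)
  have kpos: "k > 0" using lp ln by (simp add: k_def)
  have "\<forall>t. \<bar>t\<bar> < d \<longrightarrow> k * \<bar>t\<bar> \<le> sint f t \<and> sint f t \<le> K * \<bar>t\<bar>"
  proof (intro allI impI)
    fix t :: real assume td: "\<bar>t\<bar> < d"
    consider "t = 0" | "0 < t" | "t < 0" by linarith
    then show "k * \<bar>t\<bar> \<le> sint f t \<and> sint f t \<le> K * \<bar>t\<bar>"
    proof cases
      case 1 then show ?thesis by (simp add: sint_def)
    next
      case 2
      have ct: "isCont f t" using cont1[of t] td 2 by (simp add: d_def)
      have lt: "(f \<longlongrightarrow> f t) (at_left t)" using ct by (simp add: isCont_def filterlim_at_split)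
      have bd: "\<forall>s\<in>{0<..<t}. l/2 \<le> f s \<and> f s \<le> 2*l" using d2 td 2 by (force simp: d_def)
      have ct': "\<forall>s\<in>{0<..<t}. isCont f s" using cont1 td by (auto simp: d_def)
      have ft: "l/2 \<le> f t \<and> f t \<le> 2*l" using d2 td 2 by (force simp: d_def)
      have "l/2 * (t - 0) \<le> integral {0..t} f \<and> integral {0..t} f \<le> 2*l * (t - 0)"
        using int_bounds[OF 2 ct' lp(2) lt bd] ft lp(1) by simp
      then show ?thesis using 2 lp(1) ln(1)
        unfolding sint_def k_def K_def
        by (auto intro: order_trans[OF mult_right_mono[of _ "l/2"]] order_trans[OF _ mult_right_mono[of "2*l"]])
    next
      case 3
      have td3: "d3 < t" using td 3 by (simp add: d_def)
      have ct: "isCont f t" using cont1[of t] td 3 by (simp add: d_def)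
      have rt: "(f \<longlongrightarrow> f t) (at_right t)" using ct by (simp add: isCont_def filterlim_at_split)
      have bd: "\<forall>s\<in>{t<..<0}. 2*l' \<le> f s \<and> f s \<le> l'/2"
      proof
        fix s assume "s \<in> {t<..<0}"
        then have "d3 < s" "s < 0" using td3 by auto
        then show "2*l' \<le> f s \<and> f s \<le> l'/2" using d3(2) by fastforce
      qed
      have ct': "\<forall>s\<in>{t<..<0}. isCont f s" using cont1 td by (auto simp: d_def)
      have ft: "2*l' \<le> f t \<and> f t \<le> l'/2" using d3(2) td3 3 by fastforce
      have "2*l' * (0 - t) \<le> integral {t..0} f \<and> integral {t..0} f \<le> l'/2 * (0 - t)"
        using int_bounds[OF 3 ct' rt ln(2) bd] ft ln(1) by simp
      then have "- l'/2 * \<bar>t\<bar> \<le> sint f t \<and> sint f t \<le> - 2 * l' * \<bar>t\<bar>"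
        using 3 unfolding sint_def by (simp add: algebra_simps)
      moreover have "k * \<bar>t\<bar> \<le> - l'/2 * \<bar>t\<bar>" "- 2 * l' * \<bar>t\<bar> \<le> K * \<bar>t\<bar>"
        using mult_right_mono[of k "- l'/2" "\<bar>t\<bar>"] mult_right_mono[of "- 2 * l'" K "\<bar>t\<bar>"]
        by (auto simp: k_def K_def)
      ultimately show ?thesis by linarith
    qed
  qed
  then show ?thesis using dpos kpos by blast
qed


lemma transpose_add': "transpose (X + Y) = transpose X + transpose Y"
  by (simp add: transpose_def vec_eq_iff)

lemma diag_sym: "transpose (diag_mat \<gamma>) = diag_mat \<gamma>"
  by (simp add: transpose_def diag_mat_def vec_eq_iff)

lemma lin_K: "(a::real) > 0 \<Longrightarrow> class_K_inf (\<lambda>r. a * r)"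
  unfolding class_K_inf_def
  by (auto intro!: continuous_intros strict_mono_onI filterlim_tendsto_pos_mult_at_top filterlim_ident)

theorem proposition2:
  fixes A :: "real^'n^'n" and B :: "real^'p^'n" and C :: "real^'n^'p"
    and \<psi> :: "'p \<Rightarrow> real \<Rightarrow> real" and \<gamma> :: "'p \<Rightarrow> real" and \<nu> c :: real
  assumes pwc: "\<forall>i. piecewise_cont (\<psi> i)"
    and sector: "\<forall>i. (\<exists>\<zeta>>0. \<forall>s. \<psi> i s * (\<psi> i s - \<zeta> * s) \<le> 0) \<or> (\<forall>s. \<psi> i s * s \<ge> 0)"
    and lim_pos: "\<forall>i. \<exists>l>0. (\<psi> i \<longlongrightarrow> l) (at_right 0)"
    and lim_neg: "\<forall>i. \<exists>l<0. (\<psi> i \<longlongrightarrow> l) (at_left 0)"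
    and gam_pos: "\<forall>i. \<gamma> i > 0"
    and pd: "pos_def (diag_mat \<gamma> ** (C ** B) + transpose (C ** B) ** diag_mat \<gamma>)"
    and \<nu>_pos: "\<nu> > 0" and c_pos: "c > 0"
    and lower: "\<forall>y. 0 < norm y \<and> norm y \<le> \<nu> \<longrightarrow> (\<forall>w \<in> Kras_vec \<psi> y. norm (- w) \<ge> c)"
  shows "let l1 = min_eig (diag_mat \<gamma> ** (C ** B) + transpose (C ** B) ** diag_mat \<gamma>);
             l2 = spec_norm (diag_mat \<gamma> ** (C ** A)) in
         \<exists>\<mu>. 0 < \<mu> \<and> \<mu> \<le> \<nu> \<and> l1 * (c - 2 * \<mu> * l2 / l1) > 0 \<and>
           (\<exists>\<alpha>4 \<alpha>5. class_K_inf \<alpha>4 \<and> class_K_inf \<alpha>5 \<and>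
             (\<forall>x. norm x \<le> \<mu> \<longrightarrow>
                \<alpha>4 (norm (C *v x)) \<le> W_fun \<gamma> \<psi> (C *v x) \<and> W_fun \<gamma> \<psi> (C *v x) \<le> \<alpha>5 (norm (C *v x))) \<and>
             (\<forall>x. norm x \<le> \<mu> \<and> C *v x \<noteq> 0 \<longrightarrow>
                Sup (ereal ` set_lie (gen_grad C \<gamma> \<psi> x) (F_kras A B C \<psi> x))
                  \<le> ereal (- c * (l1 * (c - 2 * \<mu> * l2 / l1)))))"
proof -
  define G where "G = diag_mat \<gamma>"
  define M where "M = G ** (C ** B) + transpose (C ** B) ** G"
  define l1 where "l1 = min_eig M"
  define l2 where "l2 = spec_norm (G ** (C ** A))"
  have symG: "transpose G = G" by (simp add: G_def diag_sym)
  have symM: "transpose M = M"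
    by (simp add: M_def transpose_add' matrix_transpose_mul symG add.commute)
  note eig = sym_eig[OF symM]
  have quad: "\<And>w. l1 * (w \<bullet> w) \<le> w \<bullet> (M *v w)" using eig(3) l1_def by simp
  have l1pos: "l1 > 0"
  proof -
    obtain v where v: "v \<noteq> 0" "M *v v = l1 *\<^sub>R v" using eig(4) l1_def by auto
    have "v \<bullet> (M *v v) > 0" using pd v(1) by (simp add: pos_def_def M_def G_def)
    then have "l1 * (v \<bullet> v) > 0" using v(2) by simp
    then show ?thesis using v(1) inner_ge_zero[of v] by (auto simp: zero_less_mult_iff)
  qed
  have l2nn: "l2 \<ge> 0" unfolding l2_def spec_norm_def
    by (rule onorm_pos_le[OF matrix_vector_mul_bounded_linear])
  define oC where "oC = onorm ((*v) C)"
  have oCnn: "oC \<ge> 0" unfolding oC_def by (rule onorm_pos_le[OF matrix_vector_mul_bounded_linear])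
  have Cx: "norm (C *v x) \<le> oC * norm x" for x
    unfolding oC_def by (rule onorm[OF matrix_vector_mul_bounded_linear])
  have "\<forall>i. \<exists>d>0. \<exists>k>0. \<exists>K. \<forall>t. \<bar>t\<bar> < d \<longrightarrow> k * \<bar>t\<bar> \<le> sint (\<psi> i) t \<and> sint (\<psi> i) t \<le> K * \<bar>t\<bar>"
  proof
    fix i
    obtain l where l: "l > 0" "(\<psi> i \<longlongrightarrow> l) (at_right 0)" using lim_pos by blast
    obtain l' where l': "l' < 0" "(\<psi> i \<longlongrightarrow> l') (at_left 0)" using lim_neg by blast
    show "\<exists>d>0. \<exists>k>0. \<exists>K. \<forall>t. \<bar>t\<bar> < d \<longrightarrow> k * \<bar>t\<bar> \<le> sint (\<psi> i) t \<and> sint (\<psi> i) t \<le> K * \<bar>t\<bar>"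
      using psi_local[OF _ l l'] pwc by blast
  qed
  then obtain d k K where dkK: "\<And>i. d i > 0" "\<And>i. k i > 0"
    "\<And>i t. \<bar>t\<bar> < d i \<Longrightarrow> k i * \<bar>t\<bar> \<le> sint (\<psi> i) t \<and> sint (\<psi> i) t \<le> K i * \<bar>t\<bar>"
    by metis
  define dm where "dm = Min (range d)"
  have dmpos: "dm > 0" unfolding dm_def using dkK(1) by (subst Min_gr_iff) auto
  have dmle: "dm \<le> d i" for i unfolding dm_def by (rule Min_le) auto
  define km where "km = Min (range (\<lambda>i. \<gamma> i * k i))"
  have kmpos: "km > 0" unfolding km_def using dkK(2) gam_pos by (subst Min_gr_iff) auto
  have kmle: "km \<le> \<gamma> i * k i" for i unfolding km_def by (rule Min_le) auto
  define KM where "KM = Max (range (\<lambda>i. \<gamma> i * K i))"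
  have KMge: "\<gamma> i * K i \<le> KM" for i unfolding KM_def by (rule Max_ge) auto
  define a4 where "a4 = 2 * km"
  define a5 where "a5 = 2 * (\<bar>KM\<bar> + 1) * real CARD('p)"
  have a4pos: "a4 > 0" using kmpos by (simp add: a4_def)
  have a5pos: "a5 > 0" by (simp add: a5_def)
  have Wb: "a4 * norm y \<le> W_fun \<gamma> \<psi> y \<and> W_fun \<gamma> \<psi> y \<le> a5 * norm y" if y: "norm y < dm" for y
  proof -
    have yi: "\<bar>y $ i\<bar> < d i" for i using component_le_norm_cart[of y i] y dmle[of i] by linarith
    have lo: "km * \<bar>y $ i\<bar> \<le> \<gamma> i * sint (\<psi> i) (y $ i)" for i
    proof -
      have "km * \<bar>y $ i\<bar> \<le> \<gamma> i * k i * \<bar>y $ i\<bar>" by (rule mult_right_mono[OF kmle]) simp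
      also have "\<dots> \<le> \<gamma> i * sint (\<psi> i) (y $ i)"
        using dkK(3)[OF yi[of i]] gam_pos mult_left_mono[of _ _ "\<gamma> i"] by (simp add: mult.assoc)
      finally show ?thesis .
    qed
    have up: "\<gamma> i * sint (\<psi> i) (y $ i) \<le> (\<bar>KM\<bar> + 1) * \<bar>y $ i\<bar>" for i
    proof -
      have "\<gamma> i * sint (\<psi> i) (y $ i) \<le> \<gamma> i * K i * \<bar>y $ i\<bar>"
        using dkK(3)[OF yi[of i]] gam_pos mult_left_mono[of _ _ "\<gamma> i"] by (simp add: mult.assoc)
      also have "\<dots> \<le> (\<bar>KM\<bar> + 1) * \<bar>y $ i\<bar>" using KMge[of i] by (intro mult_right_mono) auto
      finally show ?thesis .
    qed
    have s1: "km * (\<Sum>i\<in>UNIV. \<bar>y $ i\<bar>) \<le> (\<Sum>i\<in>UNIV. \<gamma> i * sint (\<psi> i) (y $ i))"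
      unfolding sum_distrib_left by (rule sum_mono) (rule lo)
    have s2: "(\<Sum>i\<in>UNIV. \<gamma> i * sint (\<psi> i) (y $ i)) \<le> (\<bar>KM\<bar> + 1) * (\<Sum>i\<in>UNIV. \<bar>y $ i\<bar>)"
      unfolding sum_distrib_left by (rule sum_mono) (rule up)
    have s3: "(\<Sum>i\<in>UNIV. \<bar>y $ i\<bar>) \<le> real CARD('p) * norm y"
      using sum_mono[of UNIV "\<lambda>i. \<bar>y $ i\<bar>" "\<lambda>i. norm y"] component_le_norm_cart by auto
    have "km * norm y \<le> km * (\<Sum>i\<in>UNIV. \<bar>y $ i\<bar>)"
      using norm_le_l1_cart[of y] kmpos by simp
    moreover have "(\<bar>KM\<bar> + 1) * (\<Sum>i\<in>UNIV. \<bar>y $ i\<bar>) \<le> (\<bar>KM\<bar> + 1) * (real CARD('p) * norm y)"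
      using s3 by (intro mult_left_mono) auto
    ultimately show ?thesis using s1 s2 unfolding W_fun_def a4_def a5_def
      by (simp add: algebra_simps)
  qed
  define \<mu> where "\<mu> = min (\<nu> / (oC + 1)) (min (dm / (2 * (oC + 1))) (c * l1 / (4 * (l2 + 1))))"
  have mupos: "\<mu> > 0" using \<nu>_pos dmpos c_pos l1pos l2nn oCnn by (simp add: \<mu>_def)
  have mu1: "\<mu> \<le> \<nu> / (oC + 1)" "\<mu> \<le> dm / (2 * (oC + 1))" "\<mu> \<le> c * l1 / (4 * (l2 + 1))"
    by (simp_all add: \<mu>_def)
  have mule: "\<mu> \<le> \<nu>"
  proof -
    have "\<nu> / (oC + 1) \<le> \<nu>" using \<nu>_pos oCnn by (simp add: divide_le_eq)
    then show ?thesis using mu1 by simp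
  qed
  have Cmu: "norm (C *v x) \<le> \<nu> \<and> norm (C *v x) < dm" if "norm x \<le> \<mu>" for x
  proof -
    have "norm (C *v x) \<le> oC * \<mu>" using Cx[of x] that oCnn mult_left_mono by (metis order_trans)
    also have "\<dots> \<le> (oC + 1) * \<mu>" using mupos by simp
    finally have h: "norm (C *v x) \<le> (oC + 1) * \<mu>" .
    have "(oC + 1) * \<mu> \<le> \<nu>" using mu1(1) oCnn by (simp add: le_divide_eq mult.commute)
    moreover have "(oC + 1) * \<mu> \<le> dm / 2" using mu1(2) oCnn by (simp add: le_divide_eq algebra_simps)
    ultimately show ?thesis using h dmpos by linarith
  qed
  have om: "l1 * (c - 2 * \<mu> * l2 / l1) = l1 * c - 2 * \<mu> * l2" using l1pos by (simp add: field_simps)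
  have mul2: "2 * \<mu> * l2 \<le> c * l1 / 2"
  proof -
    have "2 * \<mu> * l2 \<le> 2 * (c * l1 / (4 * (l2 + 1))) * l2"
      using mu1(3) l2nn by (intro mult_right_mono) auto
    also have "\<dots> = c * l1 / 2 * (l2 / (l2 + 1))" using l2nn by (simp add: field_simps)
    also have "\<dots> \<le> c * l1 / 2" using l2nn c_pos l1pos by (intro mult_left_le) auto
    finally show ?thesis .
  qed
  have ompos: "l1 * c - 2 * \<mu> * l2 > 0"
  proof -
    have "c * l1 > 0" using c_pos l1pos by simp
    then show ?thesis using mul2 by (simp add: algebra_simps)
  qed
  have lie: "Sup (ereal ` set_lie (gen_grad C \<gamma> \<psi> x) (F_kras A B C \<psi> x)) \<le> ereal (- c * (l1 * c - 2 * \<mu> * l2))"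
    if x: "norm x \<le> \<mu>" "C *v x \<noteq> 0" for x
  proof (rule Sup_least, clarify)
    fix a assume "a \<in> set_lie (gen_grad C \<gamma> \<psi> x) (F_kras A B C \<psi> x)"
    then obtain w where w: "w \<in> Kras_vec \<psi> (C *v x)"
      and aw: "\<forall>v\<in>gen_grad C \<gamma> \<psi> x. v \<bullet> (A *v x - B *v w) = a"
      unfolding set_lie_def F_kras_def by blast
    have "2 *\<^sub>R (transpose C *v (G *v w)) \<in> gen_grad C \<gamma> \<psi> x"
      using w unfolding gen_grad_def G_def by blast
    then have a0: "2 *\<^sub>R (transpose C *v (G *v w)) \<bullet> (A *v x - B *v w) = a" using aw by blast
    then have a: "a = 2 *\<^sub>R (transpose C *v (G *v w)) \<bullet> (A *v x - B *v w)" by (rule sym)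
    have ip: "(transpose C *v (G *v w)) \<bullet> z = w \<bullet> ((G ** C) *v z)" for z
    proof -
      have "(transpose C *v (G *v w)) \<bullet> z = (G *v w) \<bullet> (C *v z)" using inner_mv[of "G *v w" C z] by simp
      also have "\<dots> = w \<bullet> (G *v (C *v z))" using inner_mv[of w G "C *v z"] symG by simp
      finally show ?thesis by (simp add: matrix_vector_mul_assoc)
    qed
    have a2: "a = 2 * (w \<bullet> ((G ** (C ** A)) *v x)) - 2 * (w \<bullet> ((G ** (C ** B)) *v w))"
      using a ip[of "A *v x - B *v w"]
      by (simp add: matrix_vector_mult_diff_distrib inner_diff_right matrix_vector_mul_assoc matrix_mul_assoc)
    have wM: "w \<bullet> (M *v w) = 2 * (w \<bullet> ((G ** (C ** B)) *v w))"
    proof -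
      have "w \<bullet> ((transpose (C ** B) ** G) *v w) = w \<bullet> ((G ** (C ** B)) *v w)"
        using inner_mv[of w "transpose (C ** B) ** G" w]
        by (simp add: matrix_transpose_mul symG inner_commute)
      then show ?thesis by (simp add: M_def matrix_vector_mult_add_rdistrib inner_add_right)
    qed
    have nCx: "0 < norm (C *v x) \<and> norm (C *v x) \<le> \<nu>" using x Cmu by auto
    have wc: "norm w \<ge> c" using lower nCx w by force
    have t1: "w \<bullet> ((G ** (C ** A)) *v x) \<le> norm w * (l2 * \<mu>)"
    proof -
      have "w \<bullet> ((G ** (C ** A)) *v x) \<le> norm w * norm ((G ** (C ** A)) *v x)" by (rule norm_cauchy_schwarz)
      also have "\<dots> \<le> norm w * (l2 * norm x)" unfolding l2_def spec_norm_def
        by (intro mult_left_mono onorm[OF matrix_vector_mul_bounded_linear]) auto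
      also have "\<dots> \<le> norm w * (l2 * \<mu>)" using x l2nn by (intro mult_left_mono) auto
      finally show ?thesis .
    qed
    have t2: "l1 * (norm w)^2 \<le> w \<bullet> (M *v w)" using quad[of w] by (simp add: power2_norm_eq_inner)
    have "a \<le> 2 * norm w * (l2 * \<mu>) - l1 * (norm w)^2" using a2 wM t1 t2 by linarith
    also have "\<dots> \<le> - c * (l1 * c - 2 * \<mu> * l2)"
    proof -
      have "0 \<le> (norm w - c) * (l1 * (norm w + c) - 2 * l2 * \<mu>)"
      proof (rule mult_nonneg_nonneg)
        show "0 \<le> norm w - c" using wc by simp
        have "l1 * norm w \<ge> 0" using l1pos by simp
        then show "0 \<le> l1 * (norm w + c) - 2 * l2 * \<mu>" using ompos by (simp add: algebra_simps)
      qed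
      then show ?thesis by (simp add: algebra_simps power2_eq_square)
    qed
    finally show "ereal a \<le> ereal (- c * (l1 * c - 2 * \<mu> * l2))" by simp
  qed
  have main: "\<exists>\<mu>. 0 < \<mu> \<and> \<mu> \<le> \<nu> \<and> l1 * (c - 2 * \<mu> * l2 / l1) > 0 \<and>
           (\<exists>\<alpha>4 \<alpha>5. class_K_inf \<alpha>4 \<and> class_K_inf \<alpha>5 \<and>
             (\<forall>x. norm x \<le> \<mu> \<longrightarrow>
                \<alpha>4 (norm (C *v x)) \<le> W_fun \<gamma> \<psi> (C *v x) \<and> W_fun \<gamma> \<psi> (C *v x) \<le> \<alpha>5 (norm (C *v x))) \<and>
             (\<forall>x. norm x \<le> \<mu> \<and> C *v x \<noteq> 0 \<longrightarrow>
                Sup (ereal ` set_lie (gen_grad C \<gamma> \<psi> x) (F_kras A B C \<psi> x))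
                  \<le> ereal (- c * (l1 * (c - 2 * \<mu> * l2 / l1)))))"
  proof (intro exI[of _ \<mu>] conjI)
    show "\<exists>\<alpha>4 \<alpha>5. class_K_inf \<alpha>4 \<and> class_K_inf \<alpha>5 \<and>
             (\<forall>x. norm x \<le> \<mu> \<longrightarrow>
                \<alpha>4 (norm (C *v x)) \<le> W_fun \<gamma> \<psi> (C *v x) \<and> W_fun \<gamma> \<psi> (C *v x) \<le> \<alpha>5 (norm (C *v x))) \<and>
             (\<forall>x. norm x \<le> \<mu> \<and> C *v x \<noteq> 0 \<longrightarrow>
                Sup (ereal ` set_lie (gen_grad C \<gamma> \<psi> x) (F_kras A B C \<psi> x))
                  \<le> ereal (- c * (l1 * (c - 2 * \<mu> * l2 / l1))))"
      apply (rule exI[of _ "\<lambda>r. a4 * r"])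
      apply (rule exI[of _ "\<lambda>r. a5 * r"])
      using lin_K[OF a4pos] lin_K[OF a5pos] Wb Cmu lie om by auto
  qed (use mupos mule om ompos in auto)
  then show ?thesis unfolding Let_def l1_def l2_def M_def G_def .
qed

end
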